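(* Let $p,q$ be positive integers with $1<q<p-q$ and $\gcd(p,q)=1$, $A=\langle q,p-q\rangle$, $s\in A\setminus\{0\}$, $r$ a positive integer with $1<r<s-r$ and $\gcd(r,s)=1$, $B=\langle r,s-r\rangle$. Let $M$ be the submonoid of $\mathbb{Q}^+$ generated by all $k/r$ ($k\in A$) and all $\frac{k'}{r}(s/r)^n$ ($k'\in B$, $n\ge1$), and $(G,G^+)=(M+(-M),M)$. Then $(G,G^+)$ is order-isomorphic to a direct limit $\varinjlim((\mathbb{Z},G_i^+),f_{i,i+1})$ where each $(\mathbb{Z},G_i^+)$ is a simple component and each $f_{i,i+1}\colon(\mathbb{Z},G_i^+)\to(\mathbb{Z},G_{i+1}^+)$ is an order-embedding given by multiplication by $r$.
   Context: $\langle a_1,\dots,a_k\rangle$ is the submonoid of $\mathbb{Z}^+$ generated by the $a_i$. A simple component is a simple partially ordered abelian group of the form $(\mathbb{Z},P)$ (simple: every nonzero positive element $u$ is an order-unit, i.e. for every $x$ there is $n$ with $-nu\le x\le nu$). An order-embedding is an injective homomorphism $f$ with $f(G^+)=f(G)\cap H^+$. The direct limit carries as positive cone the union of the images of the positive cones. *)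

theory Defs
  imports Complex_Main
begin

definition monoid2 :: "int \<Rightarrow> int \<Rightarrow> int set" where
  "monoid2 a b = {int m * a + int n * b | m n. True}"

inductive_set submonoid_gen :: "rat set \<Rightarrow> rat set" for S where
  zero: "0 \<in> submonoid_gen S"
| gen: "x \<in> S \<Longrightarrow> x \<in> submonoid_gen S"
| add: "x \<in> submonoid_gen S \<Longrightarrow> y \<in> submonoid_gen S \<Longrightarrow> x + y \<in> submonoid_gen S"

definition diff_group :: "rat set \<Rightarrow> rat set" where
  "diff_group M = {a - b | a b. a \<in> M \<and> b \<in> M}"

definition po_cone :: "int set \<Rightarrow> bool" where
  "po_cone P \<longleftrightarrow> 0 \<in> P \<and> (\<forall>x\<in>P. \<forall>y\<in>P. x + y \<in> P) \<and> (\<forall>x. x \<in> P \<and> -x \<in> P \<longrightarrow> x = 0)"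

definition order_unit :: "int set \<Rightarrow> int \<Rightarrow> bool" where
  "order_unit P u \<longleftrightarrow> (\<forall>x. \<exists>n::nat. x + int n * u \<in> P \<and> int n * u - x \<in> P)"

definition simple_component :: "int set \<Rightarrow> bool" where
  "simple_component P \<longleftrightarrow> po_cone P \<and> (\<forall>u\<in>P. u \<noteq> 0 \<longrightarrow> order_unit P u)"

definition order_embedding :: "(int \<Rightarrow> int) \<Rightarrow> int set \<Rightarrow> int set \<Rightarrow> bool" where
  "order_embedding f P Q \<longleftrightarrow> (\<forall>x y. f (x + y) = f x + f y) \<and> inj f \<and>
     f ` P = range f \<inter> Q"

fun fcomp :: "(nat \<Rightarrow> int \<Rightarrow> int) \<Rightarrow> nat \<Rightarrow> nat \<Rightarrow> int \<Rightarrow> int" where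
  "fcomp f i 0 x = x"
| "fcomp f i (Suc n) x = f (i + n) (fcomp f i n x)"

definition dl_rel :: "(nat \<Rightarrow> int \<Rightarrow> int) \<Rightarrow> ((nat \<times> int) \<times> (nat \<times> int)) set" where
  "dl_rel f = {((i,x),(j,y)). \<exists>k. i \<le> k \<and> j \<le> k \<and> fcomp f i (k - i) x = fcomp f j (k - j) y}"

definition dl_carrier :: "(nat \<Rightarrow> int \<Rightarrow> int) \<Rightarrow> (nat \<times> int) set set" where
  "dl_carrier f = UNIV // dl_rel f"

definition dl_add :: "(nat \<Rightarrow> int \<Rightarrow> int) \<Rightarrow> (nat \<times> int) set \<Rightarrow> (nat \<times> int) set \<Rightarrow> (nat \<times> int) set" where
  "dl_add f C D = (let (i,x) = (SOME a. a \<in> C); (j,y) = (SOME b. b \<in> D); k = max i j in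
      dl_rel f `` {(k, fcomp f i (k - i) x + fcomp f j (k - j) y)})"

definition dl_pos :: "(nat \<Rightarrow> int \<Rightarrow> int) \<Rightarrow> (nat \<Rightarrow> int set) \<Rightarrow> (nat \<times> int) set set" where
  "dl_pos f P = {C \<in> dl_carrier f. \<exists>i x. (i,x) \<in> C \<and> x \<in> P i}"

definition order_iso_dl :: "rat set \<Rightarrow> rat set \<Rightarrow> (nat \<Rightarrow> int \<Rightarrow> int) \<Rightarrow> (nat \<Rightarrow> int set) \<Rightarrow> bool" where
  "order_iso_dl G Gpos f P \<longleftrightarrow> (\<exists>\<phi>. bij_betw \<phi> G (dl_carrier f) \<and>
     (\<forall>a\<in>G. \<forall>b\<in>G. \<phi> (a + b) = dl_add f (\<phi> a) (\<phi> b)) \<and> \<phi> ` Gpos = dl_pos f P)"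

end

theory Submission
  imports Defs
begin

definition psi :: "int \<Rightarrow> nat \<times> int \<Rightarrow> rat" where
  "psi r a = of_int (snd a) / (of_int r) ^ (fst a + 2)"

lemma fcomp_mult: "fcomp (\<lambda>i x. r * x) i n x = r ^ n * x"
  by (induction n) auto

lemma psi_lift:
  assumes "r \<noteq> 0" "i \<le> k"
  shows "psi r (k, r ^ (k - i) * x) = psi r (i, x)"
proof -
  have "(of_int r :: rat) ^ (k + 2) = of_int r ^ (k - i) * of_int r ^ (i + 2)"
    using assms(2) by (simp flip: power_add)
  then show ?thesis using assms(1) by (simp add: psi_def)
qed

lemma psi_add:
  assumes "r \<noteq> 0"
  shows "psi r (i, x) + psi r (j, y) = psi r (max i j, r ^ (max i j - i) * x + r ^ (max i j - j) * y)"
proof -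
  have "psi r (max i j, r ^ (max i j - i) * x + r ^ (max i j - j) * y)
     = psi r (max i j, r ^ (max i j - i) * x) + psi r (max i j, r ^ (max i j - j) * y)"
    by (simp add: psi_def add_divide_distrib)
  then show ?thesis using psi_lift[OF assms, of i "max i j"] psi_lift[OF assms, of j "max i j"] by simp
qed

lemma dl_rel_psi:
  assumes "r \<noteq> 0"
  shows "dl_rel (\<lambda>i x. r * x) = {(a, b). psi r a = psi r b}"
proof (intro set_eqI iffI)
  fix z assume "z \<in> dl_rel (\<lambda>i x. r * x)"
  then obtain i x j y k where z: "z = ((i,x),(j,y))" "i \<le> k" "j \<le> k"
     "r ^ (k - i) * x = r ^ (k - j) * y"
    by (auto simp: dl_rel_def fcomp_mult)
  then have "psi r (i,x) = psi r (j,y)"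
    using psi_lift[OF assms, of i k x] psi_lift[OF assms, of j k y] by metis
  then show "z \<in> {(a, b). psi r a = psi r b}" using z by simp
next
  fix z assume "z \<in> {(a, b). psi r a = psi r b}"
  then obtain i x j y where z: "z = ((i,x),(j,y))" "psi r (i,x) = psi r (j,y)" by auto
  define k where "k = max i j"
  have "psi r (k, r ^ (k - i) * x) = psi r (k, r ^ (k - j) * y)"
    using psi_lift[OF assms, of i k x] psi_lift[OF assms, of j k y] z(2) by (simp add: k_def)
  then have "of_int (r ^ (k - i) * x) = (of_int (r ^ (k - j) * y) :: rat)" using assms by (simp add: psi_def)
  then have "r ^ (k - i) * x = r ^ (k - j) * y" by (simp only: of_int_eq_iff)
  moreover have "i \<le> k" "j \<le> k" by (auto simp: k_def)
  ultimately show "z \<in> dl_rel (\<lambda>i x. r * x)" using z(1) unfolding dl_rel_def fcomp_mult by blast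
qed

lemma mult_mem:
  fixes P :: "int set"
  assumes "0 \<in> P" "\<And>x y. x \<in> P \<Longrightarrow> y \<in> P \<Longrightarrow> x + y \<in> P" "a \<in> P" "k \<ge> 0"
  shows "k * a \<in> P"
proof -
  have "int n * a \<in> P" for n
    by (induction n) (auto simp: assms distrib_right)
  from this[of "nat k"] show ?thesis using assms(4) by simp
qed

lemma frob:
  fixes P :: "int set"
  assumes "0 \<in> P" "\<And>x y. x \<in> P \<Longrightarrow> y \<in> P \<Longrightarrow> x + y \<in> P" "a \<in> P" "a > 0" "b > 0"
    "coprime a b" "\<And>k. k \<ge> N \<Longrightarrow> k * b \<in> P"
  shows "\<exists>N'. \<forall>x \<ge> N'. x \<in> P"
proof -
  obtain u v where uv: "u * a + v * b = 1"
    using bezout_int[of a b] assms(6) by (auto simp: coprime_iff_gcd_eq_1)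
  show ?thesis
  proof (intro exI allI impI)
    fix x assume x: "x \<ge> N * b + b * a"
    define m where "m = (x * u) mod b"
    define n where "n = x * v + a * (x * u div b)"
    have m: "0 \<le> m" "m < b" using assms(5) by (auto simp: m_def)
    have "x * u = b * (x * u div b) + m" by (simp add: m_def)
    then have eq: "x - m * a = n * b"
    proof -
      have "x = x * (u * a + v * b)" using uv by simp
      also have "... = (x * u) * a + x * v * b" by (simp add: algebra_simps)
      also have "... = (b * (x * u div b) + m) * a + x * v * b" using \<open>x * u = b * (x * u div b) + m\<close> by simp
      also have "... = m * a + n * b" by (simp add: n_def algebra_simps)
      finally show ?thesis by simp
    qed
    have "m * a \<le> b * a" using m assms(4) by (simp add: mult_right_mono)
    then have "n * b \<ge> N * b" using eq x by linarith
    then have "n \<ge> N" using assms(5) by simp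
    then have "n * b \<in> P" by (rule assms(7))
    moreover have "m * a \<in> P" using mult_mem[OF assms(1,2,3) m(1)] assms(2) by blast
    ultimately have "m * a + n * b \<in> P" using assms(2) by blast
    then show "x \<in> P" using eq by (simp add: algebra_simps)
  qed
qed


lemma iso_general:
  assumes r: "r \<noteq> 0" and G: "G = range (psi r)" and M: "M \<subseteq> G"
  shows "order_iso_dl G M (\<lambda>i x. r * x) (\<lambda>i. {x. psi r (i,x) \<in> M})"
proof -
  define \<phi> where "\<phi> g = {a. psi r a = g}" for g
  have img: "dl_rel (\<lambda>i x. r * x) `` {a} = \<phi> (psi r a)" for a
    unfolding dl_rel_psi[OF r] \<phi>_def by auto
  have car: "dl_carrier (\<lambda>i x. r * x) = \<phi> ` G"
    unfolding dl_carrier_def quotient_def img G by auto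
  have ne: "g \<in> G \<Longrightarrow> \<exists>a. a \<in> \<phi> g" for g unfolding G \<phi>_def by auto
  have inj: "inj_on \<phi> G"
  proof (rule inj_onI)
    fix g h assume "g \<in> G" "h \<in> G" "\<phi> g = \<phi> h"
    then obtain a where "a \<in> \<phi> g" "a \<in> \<phi> h" using ne by metis
    then show "g = h" by (simp add: \<phi>_def)
  qed
  have add: "\<phi> (g + h) = dl_add (\<lambda>i x. r * x) (\<phi> g) (\<phi> h)" if "g \<in> G" "h \<in> G" for g h
  proof -
    obtain i x where ix: "(SOME a. a \<in> \<phi> g) = (i, x)" by fastforce
    obtain j y where jy: "(SOME b. b \<in> \<phi> h) = (j, y)" by fastforce
    have "(i,x) \<in> \<phi> g" using someI_ex[OF ne[OF that(1)]] ix by simp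
    then have gi: "psi r (i,x) = g" by (simp add: \<phi>_def)
    have "(j,y) \<in> \<phi> h" using someI_ex[OF ne[OF that(2)]] jy by simp
    then have hj: "psi r (j,y) = h" by (simp add: \<phi>_def)
    have "dl_add (\<lambda>i x. r * x) (\<phi> g) (\<phi> h) =
       dl_rel (\<lambda>i x. r * x) `` {(max i j, r ^ (max i j - i) * x + r ^ (max i j - j) * y)}"
      unfolding dl_add_def ix jy by (simp add: fcomp_mult Let_def)
    also have "... = \<phi> (g + h)" unfolding img psi_add[OF r, symmetric] gi hj ..
    finally show ?thesis by simp
  qed
  have pos: "\<phi> ` M = dl_pos (\<lambda>i x. r * x) (\<lambda>i. {x. psi r (i,x) \<in> M})"
  proof (intro set_eqI iffI)
    fix C assume "C \<in> \<phi> ` M"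
    then obtain g where g: "g \<in> M" "C = \<phi> g" by auto
    then obtain i x where "psi r (i,x) = g" using M G by auto
    then show "C \<in> dl_pos (\<lambda>i x. r * x) (\<lambda>i. {x. psi r (i,x) \<in> M})"
      using g M car unfolding dl_pos_def \<phi>_def by auto
  next
    fix C assume "C \<in> dl_pos (\<lambda>i x. r * x) (\<lambda>i. {x. psi r (i,x) \<in> M})"
    then obtain g i x where "g \<in> G" "C = \<phi> g" "(i,x) \<in> C" "psi r (i,x) \<in> M"
      unfolding dl_pos_def car by auto
    then show "C \<in> \<phi> ` M" by (auto simp: \<phi>_def)
  qed
  show ?thesis unfolding order_iso_dl_def
    by (intro exI[of _ \<phi>] conjI ballI add pos) (auto simp: bij_betw_def inj car)
qed


lemma simple_general:
  fixes P :: "int set"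
  assumes "0 \<in> P" "\<And>x y. x \<in> P \<Longrightarrow> y \<in> P \<Longrightarrow> x + y \<in> P" "\<And>x. x \<in> P \<Longrightarrow> x \<ge> 0"
    and N: "\<And>x. x \<ge> N \<Longrightarrow> x \<in> P"
  shows "simple_component P"
  unfolding simple_component_def po_cone_def
proof (intro conjI ballI allI impI)
  show "0 \<in> P" by fact
  show "x + y \<in> P" if "x \<in> P" "y \<in> P" for x y using assms(2) that .
  show "x = 0" if "x \<in> P \<and> - x \<in> P" for x using assms(3)[of x] assms(3)[of "-x"] that by linarith
  fix u assume u: "u \<in> P" "u \<noteq> 0"
  then have u1: "u \<ge> 1" using assms(3)[OF u(1)] by simp
  show "order_unit P u" unfolding order_unit_def
  proof
    fix x
    define n where "n = nat (\<bar>x\<bar> + \<bar>N\<bar>)"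
    have "int n * u \<ge> int n" using u1 by (simp add: mult_le_cancel_left1)
    moreover have "int n = \<bar>x\<bar> + \<bar>N\<bar>" by (simp add: n_def)
    ultimately have "x + int n * u \<ge> N" "int n * u - x \<ge> N" by linarith+
    then show "\<exists>n::nat. x + int n * u \<in> P \<and> int n * u - x \<in> P" using N by blast
  qed
qed

theorem proposition2p4:
  fixes p q r s :: int
  assumes "0 < p" "0 < q" "1 < q" "q < p - q" "gcd p q = 1"
    and "s \<in> monoid2 q (p - q)" "s \<noteq> 0"
    and "0 < r" "1 < r" "r < s - r" "gcd r s = 1"
  shows "\<exists>P :: nat \<Rightarrow> int set.
     (\<forall>i. simple_component (P i)) \<and>
     (\<forall>i. order_embedding (\<lambda>x. r * x) (P i) (P (Suc i))) \<and>
     order_iso_dl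
       (diff_group (submonoid_gen
          ({of_int k / of_int r | k. k \<in> monoid2 q (p - q)} \<union>
           {of_int k' / of_int r * (of_int s / of_int r) ^ n | k' n. k' \<in> monoid2 r (s - r) \<and> n \<ge> 1})))
       (submonoid_gen
          ({of_int k / of_int r | k. k \<in> monoid2 q (p - q)} \<union>
           {of_int k' / of_int r * (of_int s / of_int r) ^ n | k' n. k' \<in> monoid2 r (s - r) \<and> n \<ge> 1}))
       (\<lambda>i x. r * x) P"
proof -
  define A where "A = monoid2 q (p - q)"
  define B where "B = monoid2 r (s - r)"
  define S :: "rat set" where "S = {of_int k / of_int r | k. k \<in> A} \<union>
           {of_int k' / of_int r * (of_int s / of_int r) ^ n | k' n. k' \<in> B \<and> n \<ge> 1}"
  define M where "M = submonoid_gen S"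
  define G where "G = diff_group M"
  define P where "P i = {x. psi r (i,x) \<in> M}" for i
  have r0: "r \<noteq> 0" using assms by simp
  have M0: "0 \<in> M" by (simp add: M_def submonoid_gen.zero)
  have Madd: "x \<in> M \<Longrightarrow> y \<in> M \<Longrightarrow> x + y \<in> M" for x y by (simp add: M_def submonoid_gen.add)
  have MS: "x \<in> S \<Longrightarrow> x \<in> M" for x by (simp add: M_def submonoid_gen.gen)
  have Anonneg: "k \<in> A \<Longrightarrow> k \<ge> 0" for k using assms by (auto simp: A_def monoid2_def)
  have Bnonneg: "k \<in> B \<Longrightarrow> k \<ge> 0" for k using assms by (auto simp: B_def monoid2_def)
  have qA: "q \<in> A" unfolding A_def monoid2_def by (rule CollectI, rule exI[of _ 1], rule exI[of _ 0]) simp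
  have pqA: "p - q \<in> A" unfolding A_def monoid2_def by (rule CollectI, rule exI[of _ 0], rule exI[of _ 1]) simp
  have rB: "r \<in> B" unfolding B_def monoid2_def by (rule CollectI, rule exI[of _ 1], rule exI[of _ 0]) simp
  have srB: "s - r \<in> B" unfolding B_def monoid2_def by (rule CollectI, rule exI[of _ 0], rule exI[of _ 1]) simp
  have Mnonneg: "x \<in> M \<Longrightarrow> x \<ge> 0" for x
    unfolding M_def
  proof (induction rule: submonoid_gen.induct)
    case (gen x)
    then show ?case using Anonneg Bnonneg assms(8,10) unfolding S_def by auto
  qed auto
  have G0: "0 \<in> G" using M0 by (force simp: G_def diff_group_def)
  have GM: "x \<in> M \<Longrightarrow> x \<in> G" for x using M0 by (force simp: G_def diff_group_def)
  have Gadd: "x \<in> G \<Longrightarrow> y \<in> G \<Longrightarrow> x + y \<in> G" for x y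
  proof -
    assume "x \<in> G" "y \<in> G"
    then obtain a b c d where "x = a - b" "y = c - d" "a \<in> M" "b \<in> M" "c \<in> M" "d \<in> M"
      by (auto simp: G_def diff_group_def)
    then show ?thesis using Madd[of a c] Madd[of b d] unfolding G_def diff_group_def
      by (intro CollectI exI[of _ "a + c"] exI[of _ "b + d"]) auto
  qed
  have Gneg: "x \<in> G \<Longrightarrow> - x \<in> G" for x by (force simp: G_def diff_group_def)
  have Gnat: "of_nat n * x \<in> G" if "x \<in> G" for x n
    by (induction n) (auto simp: G0 Gadd that distrib_right)
  have Gint: "of_int z * x \<in> G" if "x \<in> G" for x z
  proof (cases "z \<ge> 0")
    case True
    then show ?thesis using Gnat[OF that, of "nat z"] by simp
  next
    case False
    then show ?thesis using Gneg[OF Gnat[OF that, of "nat (- z)"]] by simp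
  qed
  have Rclosed: "x \<in> range (psi r) \<Longrightarrow> y \<in> range (psi r) \<Longrightarrow> x + y \<in> range (psi r)" for x y
  proof -
    assume "x \<in> range (psi r)" "y \<in> range (psi r)"
    then obtain a b where "x = psi r a" "y = psi r b" by auto
    then show ?thesis using psi_add[OF r0, of "fst a" "snd a" "fst b" "snd b"] by (metis prod.collapse rangeI)
  qed
  have MR: "x \<in> range (psi r)" if "x \<in> M" for x
    using that unfolding M_def
  proof (induction rule: submonoid_gen.induct)
    case zero
    have "psi r (0,0) = 0" by (simp add: psi_def)
    then show ?case by (metis rangeI)
  next
    case (gen x)
    then show ?case unfolding S_def
    proof
      assume "x \<in> {of_int k / of_int r | k. k \<in> A}"
      then obtain k where "x = of_int k / of_int r" by auto
      then have "x = psi r (0, k * r)" using r0 by (simp add: psi_def power2_eq_square)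
      then show ?thesis by simp
    next
      assume "x \<in> {of_int k' / of_int r * (of_int s / of_int r) ^ n | k' n. k' \<in> B \<and> n \<ge> 1}"
      then obtain k n where "x = of_int k / of_int r * (of_int s / of_int r) ^ n" by auto
      then have "x = psi r (n, k * s ^ n * r)" using r0
        by (simp add: psi_def power_divide field_simps)
      then show ?thesis by simp
    qed
  next
    case (add x y)
    then show ?case using Rclosed by blast
  qed
  have GR: "x \<in> range (psi r)" if xG: "x \<in> G" for x
  proof -
    obtain a b where ab: "x = a - b" "a \<in> M" "b \<in> M" using xG by (auto simp: G_def diff_group_def)
    obtain i y where "a = psi r (i,y)" using MR[OF ab(2)] by (metis rangeE surj_pair)
    moreover obtain j z where "b = psi r (j,z)" using MR[OF ab(3)] by (metis rangeE surj_pair)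
    moreover have "- psi r (j,z) = psi r (j, -z)" by (simp add: psi_def)
    ultimately have "x = psi r (i,y) + psi r (j,-z)" using ab(1) by simp
    then show ?thesis using Rclosed by (metis rangeI)
  qed
  have Sk: "of_int k / of_int r \<in> S" if "k \<in> A" for k using that unfolding S_def by blast
  have Sk2: "of_int k / of_int r * (of_int s / of_int r) ^ n \<in> S" if "k \<in> B" "n \<ge> 1" for k n
    using that unfolding S_def by blast
  have qr: "of_int q / of_int r \<in> G" "of_int (p - q) / of_int r \<in> G"
    using GM MS Sk qA pqA by blast+
  have gqpq: "gcd q (p - q) = 1"
  proof -
    have "gcd q (p - q) = gcd (p - q) q" by (rule gcd.commute)
    also have "... = gcd p q" by (rule gcd_diff1)
    finally show ?thesis using assms(5) by simp
  qed
  obtain u v where uv: "u * q + v * (p - q) = 1" using bezout_int[of q "p - q"] gqpq by auto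
  have inv_r: "1 / of_int r \<in> G"
  proof -
    have "of_int u * (of_int q / of_int r) + of_int v * (of_int (p - q) / of_int r) \<in> G"
      using Gadd Gint qr by blast
    moreover have "of_int u * (of_int q / of_int r) + of_int v * (of_int (p - q) / of_int r)
        = (of_int (u * q + v * (p - q)) :: rat) / of_int r"
      using r0 by (simp add: field_simps)
    ultimately show ?thesis using uv by simp
  qed
  have one: "(1::rat) \<in> G" using Gint[OF inv_r, of r] r0 by simp
  have inv_pow: "1 / (of_int r) ^ n \<in> G" for n
  proof (cases "n = 0")
    case True then show ?thesis using one by simp
  next
    case False
    then have "n \<ge> 1" by simp
    then have "of_int r / of_int r * (of_int s / of_int r) ^ n \<in> S" using rB Sk2 by blast
    then have sn: "(of_int s / of_int r) ^ n \<in> G" using r0 GM MS by simp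
    have "coprime (s ^ n) (r ^ n)" using assms(11)
      by (simp add: coprime_iff_gcd_eq_1[symmetric] coprime_commute)
    then obtain a b where ab: "a * s ^ n + b * r ^ n = 1"
      using bezout_int[of "s ^ n" "r ^ n"] by (auto simp: coprime_iff_gcd_eq_1)
    have "of_int a * (of_int s / of_int r) ^ n + of_int b * 1 \<in> G" using Gadd Gint sn one by blast
    moreover have "of_int a * (of_int s / of_int r) ^ n + of_int b * 1
       = (of_int (a * s ^ n + b * r ^ n) :: rat) / of_int r ^ n"
      using r0 by (simp add: field_simps power_divide)
    ultimately show ?thesis using ab by simp
  qed
  have RG: "psi r a \<in> G" for a
  proof -
    have "psi r a = of_int (snd a) * (1 / of_int r ^ (fst a + 2))" by (simp add: psi_def)
    then show ?thesis using Gint[OF inv_pow, of "snd a" "fst a + 2"] by (simp only:)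
  qed
  have Geq: "G = range (psi r)" using GR RG by blast
  have MG: "M \<subseteq> G" using GM by blast
  have P0: "0 \<in> P i" for i using M0 by (simp add: P_def psi_def)
  have Padd: "x \<in> P i \<Longrightarrow> y \<in> P i \<Longrightarrow> x + y \<in> P i" for x y i
    using Madd by (simp add: P_def psi_def add_divide_distrib)
  have Pnonneg: "x \<ge> 0" if xP: "x \<in> P i" for x i
  proof -
    have "(0::rat) \<le> of_int x / of_int r ^ (i + 2)" using Mnonneg xP by (simp add: P_def psi_def)
    moreover have "(0::rat) < of_int r ^ (i + 2)" using assms(8) by simp
    ultimately have "(0::rat) \<le> of_int x" by (simp add: zero_le_divide_iff)
    then show ?thesis by simp
  qed
  have cof: "\<exists>N. \<forall>x \<ge> N. x \<in> P i" for i
  proof -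
    define Q where "Q = {k. k * r ^ (i+1) \<in> P i}"
    have Q0: "0 \<in> Q" using P0 by (simp add: Q_def)
    have Qadd: "x \<in> Q \<Longrightarrow> y \<in> Q \<Longrightarrow> x + y \<in> Q" for x y
      using Padd by (simp add: Q_def distrib_right)
    have memk: "k * r ^ (i+1) \<in> P i" if "k \<in> A" for k
    proof -
      have "of_int k / of_int r \<in> M" using that Sk MS by blast
      moreover have "psi r (i, k * r ^ (i+1)) = of_int k / of_int r" using r0
        by (simp add: psi_def field_simps)
      ultimately show ?thesis by (simp add: P_def)
    qed
    have "q \<in> Q" "p - q \<in> Q" using memk qA pqA by (auto simp: Q_def)
    have "\<exists>N. \<forall>x \<ge> N. x \<in> Q"
      apply (rule frob[OF Q0 Qadd \<open>q \<in> Q\<close>, of "p - q" 0])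
      using assms gqpq \<open>p - q \<in> Q\<close> mult_mem[OF Q0 Qadd \<open>p - q \<in> Q\<close>]
      by (auto simp: coprime_iff_gcd_eq_1)
    then obtain N1 where N1: "\<And>k. k \<ge> N1 \<Longrightarrow> k * r ^ (i+1) \<in> P i" by (auto simp: Q_def)
    have sP: "s ^ (i+1) * (s - r) \<in> P i"
    proof -
      have "of_int (s - r) / of_int r * (of_int s / of_int r) ^ (i+1) \<in> M"
        using srB Sk2[of "s - r" "i+1"] MS by simp
      moreover have "psi r (i, s ^ (i+1) * (s - r)) = of_int (s - r) / of_int r * (of_int s / of_int r) ^ (i+1)"
        using r0 by (simp add: psi_def field_simps power_divide)
      ultimately show ?thesis by (simp add: P_def)
    qed
    have cop: "coprime (s ^ (i+1) * (s - r)) (r ^ (i+1))"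
    proof -
      have "coprime s r" using assms(11) by (simp add: coprime_iff_gcd_eq_1 gcd.commute)
      moreover have "coprime (s - r) r" using assms(11)
      proof -
        have "gcd (s - r) r = gcd s r" by (rule gcd_diff1)
        then show ?thesis using assms(11) by (simp add: coprime_iff_gcd_eq_1 gcd.commute)
      qed
      ultimately show ?thesis by simp
    qed
    show ?thesis
      apply (rule frob[OF P0 Padd sP _ _ cop, of N1])
      using assms N1 by auto
  qed
  have simple: "simple_component (P i)" for i
  proof -
    obtain N where "\<forall>x \<ge> N. x \<in> P i" using cof[of i] by blast
    then show ?thesis
      by (intro simple_general[where P="P i" and N=N] P0 Padd Pnonneg) auto
  qed
  have emb: "order_embedding (\<lambda>x. r * x) (P i) (P (Suc i))" for i
  proof -
    have ps: "psi r (Suc i, r * x) = psi r (i, x)" for x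
      using psi_lift[OF r0, of i "Suc i" x] by simp
    show ?thesis unfolding order_embedding_def
    proof (intro conjI allI)
      show "r * (x + y) = r * x + r * y" for x y by (simp add: distrib_left)
      show "inj ((*) r)" using r0 by (simp add: inj_on_def)
      show "(*) r ` P i = range ((*) r) \<inter> P (Suc i)"
        unfolding P_def using ps by auto
    qed
  qed
  have "order_iso_dl G M (\<lambda>i x. r * x) P"
    using iso_general[OF r0 Geq MG] unfolding P_def by simp
  then show ?thesis using simple emb unfolding G_def M_def S_def A_def B_def by blast
qed

end
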